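(* Let $n\ge 3$ be an integer. Consider the map $\ell\mapsto Y(\ell)$ sending the vector $\ell=(\ell_{ij})_{1\le i<j\le n+1}$ of edge-lengths of an $n$-simplex with vertices $v_1,\dots,v_{n+1}$ to the vector $Y=(Y_F)_F$, where $F$ ranges over the $(n-1)$-element subsets of $\{1,\dots,n+1\}$ and $Y_F$ is the $(n-2)$-dimensional volume of the face $\mathrm{conv}\{v_i:i\in F\}$. Let $p_1$ be the point with all $\ell_{ij}=1$ (the regular simplex with unit edges), and let $J(p_1)=\partial Y/\partial \ell$ be the Jacobian at $p_1$. Let $M$ be the matrix with rows indexed by edges $e=\{i,j\}$ and columns indexed by faces $F$, with $M_{e,F}=1$ if $e\subseteq F$ and $M_{e,F}=0$ otherwise. Then \[ J(p_1)=\frac{1}{(n-2)!\,(n-1)^{1/2}\,2^{(n-4)/2}}\,M . \]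
   Context: An edge $\{i,j\}$ is incident with the $(n-2)$-face indexed by $F$ when $\{i,j\}\subseteq F$. *)

theory Defs
  imports Complex_Main "Jordan_Normal_Form.Determinant"
begin

text \<open>Vertices of the n-simplex are labelled 1..n+1. An edge-length vector is a
function on pairs (i,j) with i < j; only its values on edges matter.\<close>

definition edges :: "nat \<Rightarrow> (nat \<times> nat) set" where
  "edges n = {(i,j). 1 \<le> i \<and> i < j \<and> j \<le> n + 1}"

definition faces :: "nat \<Rightarrow> nat set set" where
  "faces n = {F. F \<subseteq> {1..n+1} \<and> card F = n - 1}"

definition elen :: "(nat \<times> nat \<Rightarrow> real) \<Rightarrow> nat \<Rightarrow> nat \<Rightarrow> real" where
  "elen l i j = l (min i j, max i j)"

text \<open>Gram matrix of the edge vectors v_{a_p} - v_{a_0}, p = 1..k, of the simplex with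
vertex list a_0,...,a_k, expressed through the edge lengths (polarization identity).\<close>
definition gram_of_lengths :: "(nat \<times> nat \<Rightarrow> real) \<Rightarrow> nat list \<Rightarrow> real mat" where
  "gram_of_lengths l as =
     (let k = length as - 1; a0 = as ! 0 in
      mat k k (\<lambda>(p,q).
        ((elen l a0 (as ! (p+1)))\<^sup>2 + (elen l a0 (as ! (q+1)))\<^sup>2
          - (if p = q then 0 else (elen l (as ! (p+1)) (as ! (q+1)))\<^sup>2)) / 2))"

definition face_volume :: "(nat \<times> nat \<Rightarrow> real) \<Rightarrow> nat set \<Rightarrow> real" where
  "face_volume l F =
     sqrt (det (gram_of_lengths l (sorted_list_of_set F))) / fact (card F - 1)"

definition incid :: "nat \<times> nat \<Rightarrow> nat set \<Rightarrow> real" where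
  "incid e F = (if {fst e, snd e} \<subseteq> F then 1 else 0)"

end

theory Submission
  imports Defs
begin

lemma rowlin:
  assumes "m < k"
  shows "det (mat k k (\<lambda>(i,j). if i = m then f j + g j else h i j) :: real mat)
       = det (mat k k (\<lambda>(i,j). if i = m then f j else h i j))
       + det (mat k k (\<lambda>(i,j). if i = m then g j else h i j))"
proof -
  have e: "\<And>f. mat k k (\<lambda>(i,j). if i = m then f j else h i j) =
     mat\<^sub>r k k (\<lambda>i. if i = m then vec k f else vec k (h i))"
    by (rule eq_matI) auto
  have e2: "mat k k (\<lambda>(i,j). if i = m then f j + g j else h i j) =
     mat\<^sub>r k k (\<lambda>i. if i = m then vec k f + vec k g else vec k (h i))"
    by (rule eq_matI) auto
  show ?thesis unfolding e2 e
    by (rule det_row_add[of "\<lambda>_. vec k f" m k "\<lambda>_. vec k g"]) (use assms in auto)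
qed

lemma rowscale:
  assumes "m < k"
  shows "det (mat k k (\<lambda>(i,j). if i = m then c * f j else h i j) :: real mat)
       = c * det (mat k k (\<lambda>(i,j). if i = m then f j else h i j))"
proof -
  have "mat k k (\<lambda>(i,j). if i = m then c * f j else h i j) =
        multrow m c (mat k k (\<lambda>(i,j). if i = m then f j else h i j))"
    by (rule eq_matI) (auto simp: mat_multrow_gen_def)
  then show ?thesis using det_multrow[OF assms, of _ c] by simp
qed

lemma rowunit:
  assumes "m < k"
  shows "det (mat k k (\<lambda>(i,j). if i = m then (if j = m then 1 else 0) else h i j) :: real mat)
       = det (mat (k-1) (k-1) (\<lambda>(i,j). h (if i < m then i else Suc i) (if j < m then j else Suc j)))"
proof -
  let ?A = "mat k k (\<lambda>(i,j). if i = m then (if j = m then 1 else 0) else h i j) :: real mat"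
  have "det ?A = (\<Sum>j<k. ?A $$ (m,j) * cofactor ?A m j)"
    by (rule laplace_expansion_row) (use assms in auto)
  also have "\<dots> = (\<Sum>j<k. if j = m then cofactor ?A m m else 0)"
    by (rule sum.cong) (use assms in auto)
  also have "\<dots> = cofactor ?A m m" using assms by simp
  also have "\<dots> = det (mat_delete ?A m m)" unfolding cofactor_def by (simp flip: mult_2)
  also have "mat_delete ?A m m = mat (k-1) (k-1) (\<lambda>(i,j). h (if i < m then i else Suc i) (if j < m then j else Suc j))"
    unfolding mat_delete_def by (rule eq_matI) (use assms in auto)
  finally show ?thesis .
qed

lemma rowident:
  assumes "m < k" "m' < k" "m \<noteq> m'"
  shows "det (mat k k (\<lambda>(i,j). if i = m then h m' j else h i j) :: real mat) = 0"
  by (rule det_identical_rows[of _ k m m']) (use assms in \<open>auto intro!: eq_vecI\<close>)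

definition A1 :: "nat \<Rightarrow> real mat" where
  "A1 k = mat k k (\<lambda>(i,j). if i = j then 2 else 1)"

lemma W1: "det (mat (Suc k) (Suc k) (\<lambda>(i,j). if i = 0 then 1 else if i = j then 2 else 1) :: real mat) = 1"
proof (induction k)
  case 0
  then show ?case by (subst det_single) auto
next
  case (Suc k)
  let ?h = "\<lambda>i j. if i = 0 then 1 else if i = j then 2 else (1::real)"
  have "mat (Suc (Suc k)) (Suc (Suc k)) (\<lambda>(i,j). ?h i j) =
        mat (Suc (Suc k)) (Suc (Suc k)) (\<lambda>(i,j). if i = 1 then (if j = 1 then 1 else 0) + ?h 0 j else ?h i j)"
    by (rule eq_matI) auto
  then have "det (mat (Suc (Suc k)) (Suc (Suc k)) (\<lambda>(i,j). ?h i j))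
     = det (mat (Suc (Suc k)) (Suc (Suc k)) (\<lambda>(i,j). if i = 1 then (if j = 1 then 1 else 0) else ?h i j))
     + det (mat (Suc (Suc k)) (Suc (Suc k)) (\<lambda>(i,j). if i = 1 then ?h 0 j else ?h i j))"
    using rowlin[of 1 "Suc (Suc k)"] by simp
  also have "det (mat (Suc (Suc k)) (Suc (Suc k)) (\<lambda>(i,j). if i = 1 then ?h 0 j else ?h i j)) = 0"
    by (rule rowident) auto
  also have "det (mat (Suc (Suc k)) (Suc (Suc k)) (\<lambda>(i,j). if i = 1 then (if j = 1 then 1 else 0) else ?h i j))
     = det (mat (Suc k) (Suc k) (\<lambda>(i,j). ?h (if i < 1 then i else Suc i) (if j < 1 then j else Suc j)))"
    using rowunit[of 1 "Suc (Suc k)" ?h] by simp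
  also have "mat (Suc k) (Suc k) (\<lambda>(i,j). ?h (if i < 1 then i else Suc i) (if j < 1 then j else Suc j))
      = mat (Suc k) (Suc k) (\<lambda>(i,j). ?h i j)"
    by (rule eq_matI) auto
  finally show ?case using Suc by simp
qed

lemma detA1: "det (A1 k) = real k + 1"
proof (induction k)
  case 0
  then show ?case unfolding A1_def by (subst det_dim_zero) auto
next
  case (Suc k)
  let ?h = "\<lambda>i j. if i = j then 2 else (1::real)"
  have "A1 (Suc k) = mat (Suc k) (Suc k) (\<lambda>(i,j). if i = 0 then (if j = 0 then 1 else 0) + 1 else ?h i j)"
    unfolding A1_def by (rule eq_matI) auto
  then have "det (A1 (Suc k)) = det (mat (Suc k) (Suc k) (\<lambda>(i,j). if i = 0 then (if j = 0 then 1 else 0) else ?h i j))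
     + det (mat (Suc k) (Suc k) (\<lambda>(i,j). if i = 0 then 1 else ?h i j))"
    using rowlin[of 0 "Suc k"] by simp
  also have "det (mat (Suc k) (Suc k) (\<lambda>(i,j). if i = 0 then 1 else ?h i j)) = 1"
    using W1[of k] by simp
  also have "det (mat (Suc k) (Suc k) (\<lambda>(i,j). if i = 0 then (if j = 0 then 1 else 0) else ?h i j))
     = det (mat k k (\<lambda>(i,j). ?h (Suc i) (Suc j)))"
    using rowunit[of 0 "Suc k" ?h] by simp
  also have "mat k k (\<lambda>(i,j). ?h (Suc i) (Suc j)) = A1 k"
    unfolding A1_def by (rule eq_matI) auto
  finally show ?case using Suc by simp
qed


lemma A1_row_unit:
  assumes "a < k"
  shows "det (mat k k (\<lambda>(i,j). if i = a then (if j = a then 1 else 0) else (if i = j then 2 else 1)) :: real mat) = real k"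
proof -
  have "det (mat k k (\<lambda>(i,j). if i = a then (if j = a then 1 else 0) else (if i = j then 2 else 1)) :: real mat)
    = det (mat (k-1) (k-1) (\<lambda>(i,j). (\<lambda>i j. if i = j then 2 else (1::real)) (if i < a then i else Suc i) (if j < a then j else Suc j)))"
    by (rule rowunit[OF assms])
  also have "mat (k-1) (k-1) (\<lambda>(i,j). (\<lambda>i j. if i = j then 2 else (1::real)) (if i < a then i else Suc i) (if j < a then j else Suc j)) = A1 (k-1)"
    unfolding A1_def by (rule eq_matI) auto
  finally show ?thesis using detA1[of "k-1"] assms by simp
qed

lemma A1_row_ones:
  assumes "a < k"
  shows "det (mat k k (\<lambda>(i,j). if i = a then 1 else (if i = j then 2 else 1)) :: real mat) = 1"
proof -
  let ?h = "\<lambda>i j. if i = j then 2 else (1::real)"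
  have "mat k k (\<lambda>(i,j). if i = a then 1 else ?h i j) =
        mat k k (\<lambda>(i,j). if i = a then ?h a j + (-1) * (if j = a then 1 else 0) else ?h i j)"
    by (rule eq_matI) auto
  then have "det (mat k k (\<lambda>(i,j). if i = a then 1 else ?h i j)) =
      det (mat k k (\<lambda>(i,j). if i = a then ?h a j else ?h i j)) + (-1) *
      det (mat k k (\<lambda>(i,j). if i = a then (if j = a then 1 else 0) else ?h i j))"
    using rowlin[OF assms] rowscale[OF assms] by simp
  also have "mat k k (\<lambda>(i,j). if i = a then ?h a j else ?h i j) = A1 k"
    unfolding A1_def by (rule eq_matI) auto
  finally show ?thesis using detA1[of k] A1_row_unit[OF assms] by simp
qed

lemma A1_row_other:
  assumes "a < k" "b < k" "a \<noteq> b"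
  shows "det (mat k k (\<lambda>(i,j). if i = a then (if j = b then 1 else 0) else (if i = j then 2 else 1)) :: real mat) = -1"
proof -
  let ?h = "\<lambda>i j. if i = j then 2 else (1::real)"
  have "mat k k (\<lambda>(i,j). if i = a then (if j = b then 1 else 0) else ?h i j) =
        mat k k (\<lambda>(i,j). if i = a then ?h b j + (-1) * 1 else ?h i j)"
    by (rule eq_matI) auto
  then have "det (mat k k (\<lambda>(i,j). if i = a then (if j = b then 1 else 0) else ?h i j)) =
      det (mat k k (\<lambda>(i,j). if i = a then ?h b j else ?h i j)) + (-1) *
      det (mat k k (\<lambda>(i,j). if i = a then 1 else ?h i j))"
    using rowlin[OF assms(1)] rowscale[OF assms(1)] by simp
  also have "det (mat k k (\<lambda>(i,j). if i = a then ?h b j else ?h i j)) = 0"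
    by (rule rowident) (use assms in auto)
  finally show ?thesis using A1_row_ones[OF assms(1)] by simp
qed

lemma A1_two_units:
  assumes "p < q" "q < k"
  shows "det (mat k k (\<lambda>(i,j). if i = p then (if j = p then 1 else 0) else
       if i = q then (if j = q then 1 else 0) else (if i = j then 2 else 1)) :: real mat) = real k - 1"
proof -
  let ?h = "\<lambda>i j. if i = q then (if j = q then 1 else 0) else if i = j then 2 else (1::real)"
  have "det (mat k k (\<lambda>(i,j). if i = p then (if j = p then 1 else 0) else ?h i j))
    = det (mat (k-1) (k-1) (\<lambda>(i,j). ?h (if i < p then i else Suc i) (if j < p then j else Suc j)))"
    by (rule rowunit) (use assms in auto)
  also have "mat (k-1) (k-1) (\<lambda>(i,j). ?h (if i < p then i else Suc i) (if j < p then j else Suc j))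
    = mat (k-1) (k-1) (\<lambda>(i,j). if i = q - 1 then (if j = q - 1 then 1 else 0) else if i = j then 2 else 1)"
    by (rule eq_matI) (use assms in auto)
  also have "det \<dots> = real (k-1)"
    by (rule A1_row_unit) (use assms in auto)
  finally show ?thesis using assms by simp
qed

lemma caseB_det:
  assumes "m < k"
  shows "det (mat k k (\<lambda>(p,q). (if p=m then t else 1)^2 + (if q=m then t else 1)^2 - (if p=q then 0 else 1)) :: real mat)
     = t^2 * ((real k + 1) + (t^2 - 1) * (1 - real k))"
proof -
  let ?h = "\<lambda>p q. if q = m then t^2 else if p = q then 2 else (1::real)"
  have "mat k k (\<lambda>(p,q). (if p=m then t else 1)^2 + (if q=m then t else 1)^2 - (if p=q then 0 else 1))
     = mat k k (\<lambda>(p,q). if p = m then t^2 * (if q = m then 2 else 1) else ?h p q)"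
    by (rule eq_matI) auto
  then have "det (mat k k (\<lambda>(p,q). (if p=m then t else 1)^2 + (if q=m then t else 1)^2 - (if p=q then 0 else 1)))
    = t^2 * det (mat k k (\<lambda>(p,q). if p = m then (if q = m then 2 else 1) else ?h p q))"
    using rowscale[OF assms] by simp
  also have "det (mat k k (\<lambda>(p,q). if p = m then (if q = m then 2 else 1) else ?h p q))
     = det ((mat k k (\<lambda>(p,q). if p = m then (if q = m then 2 else 1) else ?h p q))\<^sup>T)"
    by (rule det_transpose[symmetric]) auto
  also have "(mat k k (\<lambda>(p,q). if p = m then (if q = m then 2 else 1) else ?h p q))\<^sup>T
     = mat k k (\<lambda>(p,q). if p = m then (if q = m then 2 else 1) + (t^2 - 1) * (if q = m then 0 else 1)
          else (if p = q then 2 else 1))"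
    by (rule eq_matI) auto
  also have "det \<dots> = det (A1 k) + (t^2 - 1) *
      det (mat k k (\<lambda>(p,q). if p = m then (if q = m then 0 else 1) else (if p = q then 2 else 1)))"
  proof -
    have "mat k k (\<lambda>(p,q). if p = m then (if q = m then 2 else 1) else (if p = q then 2 else 1)) = A1 k"
      unfolding A1_def by (rule eq_matI) auto
    then show ?thesis using rowlin[OF assms] rowscale[OF assms] by simp
  qed
  also have "det (mat k k (\<lambda>(p,q). if p = m then (if q = m then 0 else 1) else (if p = q then 2 else 1)) :: real mat)
      = 1 - real k"
  proof -
    have "mat k k (\<lambda>(p,q). if p = m then (if q = m then 0 else 1) else (if p = q then 2 else (1::real)))
       = mat k k (\<lambda>(p,q). if p = m then (\<lambda>p q. if p = q then 2 else (1::real)) m q + (-2) * (if q = m then 1 else 0)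
          else (\<lambda>p q. if p = q then 2 else (1::real)) p q)"
      by (rule eq_matI) auto
    moreover have "mat k k (\<lambda>(p,q). if p = m then (\<lambda>p q. if p = q then 2 else (1::real)) m q else (\<lambda>p q. if p = q then 2 else (1::real)) p q) = A1 k"
      unfolding A1_def by (rule eq_matI) auto
    ultimately show ?thesis using rowlin[OF assms] rowscale[OF assms] detA1[of k] A1_row_unit[OF assms] by simp
  qed
  finally show ?thesis using detA1[of k] by simp
qed

lemma caseA_det:
  assumes "p < q" "q < k"
  shows "det (mat k k (\<lambda>(a,b). if a = b then 2 else if {a,b} = {p,q} then 2 - t^2 else 1) :: real mat)
     = (real k + 1) - 2 * (1 - t^2) - (real k - 1) * (1 - t^2)^2"
proof -
  have pk: "p < k" using assms by simp
  let ?c = "1 - t^2"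
  let ?h = "\<lambda>a b. if a = b then 2 else (1::real)"
  let ?e = "\<lambda>x j. if j = x then 1 else (0::real)"
  let ?H = "\<lambda>a b. if a = b then 2 else if {a,b} = {p,q} then 2 - t^2 else (1::real)"
  have "mat k k (\<lambda>(a,b). ?H a b) = mat k k (\<lambda>(a,b). if a = p then ?h p b + ?c * ?e q b else ?H a b)"
    by (rule eq_matI) (use assms in auto)
  then have 1: "det (mat k k (\<lambda>(a,b). ?H a b)) =
     det (mat k k (\<lambda>(a,b). if a = p then ?h p b else ?H a b)) + ?c *
     det (mat k k (\<lambda>(a,b). if a = p then ?e q b else ?H a b))"
    using rowlin[OF pk] rowscale[OF pk] by simp
  have "mat k k (\<lambda>(a,b). if a = p then ?h p b else ?H a b) =
     mat k k (\<lambda>(a,b). if a = q then ?h q b + ?c * ?e p b else ?h a b)"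
    by (rule eq_matI) (use assms in auto)
  then have 2: "det (mat k k (\<lambda>(a,b). if a = p then ?h p b else ?H a b)) =
     det (mat k k (\<lambda>(a,b). if a = q then ?h q b else ?h a b)) + ?c *
     det (mat k k (\<lambda>(a,b). if a = q then ?e p b else ?h a b))"
    using rowlin[OF assms(2)] rowscale[OF assms(2)] by simp
  have "mat k k (\<lambda>(a,b). if a = q then ?h q b else ?h a b) = A1 k"
    unfolding A1_def by (rule eq_matI) auto
  note 2 = 2[unfolded this]
  have "mat k k (\<lambda>(a,b). if a = p then ?e q b else ?H a b) =
     mat k k (\<lambda>(a,b). if a = q then ?h q b + ?c * ?e p b else (if a = p then ?e q b else ?h a b))"
    by (rule eq_matI) (use assms in auto)
  then have 3: "det (mat k k (\<lambda>(a,b). if a = p then ?e q b else ?H a b)) =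
     det (mat k k (\<lambda>(a,b). if a = q then ?h q b else (if a = p then ?e q b else ?h a b))) + ?c *
     det (mat k k (\<lambda>(a,b). if a = q then ?e p b else (if a = p then ?e q b else ?h a b)))"
    using rowlin[OF assms(2)] rowscale[OF assms(2)] by simp
  have "mat k k (\<lambda>(a,b). if a = q then ?h q b else (if a = p then ?e q b else ?h a b))
     = mat k k (\<lambda>(a,b). if a = p then ?e q b else ?h a b)"
    by (rule eq_matI) (use assms in auto)
  note 3 = 3[unfolded this]
  have X1: "det (mat k k (\<lambda>(a,b). if a = p then ?e q b else ?h a b)) = -1"
    using A1_row_other[of p k q] assms by simp
  have X2: "det (mat k k (\<lambda>(a,b). if a = q then ?e p b else ?h a b)) = -1"
    using A1_row_other[of q k p] assms by simp
  have Z: "det (mat k k (\<lambda>(a,b). if a = q then ?e p b else (if a = p then ?e q b else ?h a b))) = 1 - real k"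
  proof -
    let ?M = "mat k k (\<lambda>(a,b). if a = q then ?e p b else (if a = p then ?e q b else ?h a b))"
    have "swaprows p q ?M = mat k k (\<lambda>(i,j). if i = p then (if j = p then 1 else 0) else
       if i = q then (if j = q then 1 else 0) else (if i = j then 2 else 1))"
      by (rule eq_matI) (use assms in \<open>auto simp: mat_swaprows_def\<close>)
    moreover have "det (swaprows p q ?M) = - det ?M"
      by (rule det_swaprows) (use assms in auto)
    ultimately show ?thesis using A1_two_units[OF assms] by simp
  qed
  show ?thesis using 1 2 3 X1 X2 Z detA1[of k] by (simp add: algebra_simps power2_eq_square)
qed


lemma const_eq:
  assumes "k \<ge> 1"
  shows "inverse (sqrt ((1/2)^k * (real k + 1))) / 2 * (4 * (1/2)^k) / fact k
     = 1 / (fact k * sqrt (real k + 1) * 2 powr ((real k - 2) / 2))"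
proof -
  have s: "sqrt ((1/2::real)^k) = 2 powr (- real k / 2)"
  proof -
    have "sqrt ((1/2::real)^k) = sqrt (2 powr (- real k))"
      by (simp add: powr_minus_divide powr_realpow power_one_over)
    also have "\<dots> = (2 powr (- real k)) powr (1/2)" by (simp add: powr_half_sqrt)
    also have "\<dots> = 2 powr (- real k / 2)" by (simp add: powr_powr)
    finally show ?thesis .
  qed
  have s2: "(1/2::real)^k = 2 powr (- real k)"
    by (simp add: powr_minus_divide powr_realpow power_one_over)
  have p: "2 powr ((real k - 2) / 2) = 2 powr (real k / 2) / 2"
    by (simp add: diff_divide_distrib powr_diff)
  have q: "(2::real) powr (- real k) = 2 powr (- real k / 2) * 2 powr (- real k / 2)"
    by (simp flip: powr_add)
  have "2 powr (- real k / 2) * 2 powr (real k / 2) = (1::real)" by (simp flip: powr_add)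
  then show ?thesis
    unfolding real_sqrt_mult s p s2 q
    by (simp add: field_simps powr_minus)
qed

lemma final_deriv:
  assumes "k \<ge> 1" "P 1 = real k + 1" "(P has_real_derivative 4) (at 1)"
  shows "((\<lambda>t. sqrt ((1/2)^k * P t) / fact k) has_real_derivative
     1 / (fact k * sqrt (real k + 1) * 2 powr ((real k - 2) / 2))) (at 1)"
proof -
  have g: "((\<lambda>t. (1/2)^k * P t) has_real_derivative (1/2)^k * 4) (at 1)"
    using assms(3) by (auto intro: derivative_eq_intros)
  have pos: "0 < (1/2::real)^k * P 1" using assms(2) by simp
  have "((\<lambda>t. sqrt ((1/2)^k * P t)) has_real_derivative inverse (sqrt ((1/2)^k * P 1)) / 2 * ((1/2)^k * 4)) (at 1)"
    by (rule DERIV_chain2[OF DERIV_real_sqrt[OF pos] g])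
  then have "((\<lambda>t. sqrt ((1/2)^k * P t) / fact k) has_real_derivative inverse (sqrt ((1/2)^k * P 1)) / 2 * ((1/2)^k * 4) / fact k) (at 1)"
    by (rule DERIV_cdivide)
  then show ?thesis using const_eq[OF assms(1)] assms(2) by (simp add: mult.commute)
qed


lemma gram_expl:
  assumes len: "length as = Suc k"
    and w: "\<And>a b. a < Suc k \<Longrightarrow> b < Suc k \<Longrightarrow> a \<noteq> b \<Longrightarrow> elen l (as!a) (as!b) = w a b"
  shows "gram_of_lengths l as = mat k k (\<lambda>(p,q). ((w 0 (Suc p))^2 + (w 0 (Suc q))^2
             - (if p = q then 0 else (w (Suc p) (Suc q))^2)) / 2)"
  unfolding gram_of_lengths_def Let_def len
  by (rule eq_matI) (auto simp: w)

theorem lemma1: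
  fixes n :: nat and e :: "nat \<times> nat" and F :: "nat set"
  assumes "n \<ge> 3" and "e \<in> edges n" and "F \<in> faces n"
  shows "((\<lambda>t. face_volume ((\<lambda>_. 1)(e := t)) F) has_real_derivative
           (1 / (fact (n - 2) * sqrt (real n - 1) * 2 powr ((real n - 4) / 2))) * incid e F)
         (at 1)"
proof -
  define k where "k = n - 2"
  have k1: "k \<ge> 1" and nk: "n = k + 2" using assms(1) unfolding k_def by auto
  obtain i j where e: "e = (i,j)" and ij: "1 \<le> i" "i < j" "j \<le> n + 1"
    using assms(2) unfolding edges_def by auto
  have Fsub: "F \<subseteq> {1..n+1}" and cF: "card F = Suc k"
    using assms(3) nk unfolding faces_def by auto
  have finF: "finite F" using Fsub finite_subset by blast
  define as where "as = sorted_list_of_set F"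
  have len: "length as = Suc k" unfolding as_def using cF by simp
  have dist: "distinct as" and setas: "set as = F" and sorted: "sorted as"
    unfolding as_def using finF by auto
  have fv: "\<And>l. face_volume l F = sqrt (det (gram_of_lengths l as)) / fact k"
    unfolding face_volume_def as_def cF by simp
  have el: "\<And>t x y. elen ((\<lambda>_. 1)(e := t)) x y = (if (x = i \<and> y = j) \<or> (x = j \<and> y = i) then t else 1)"
    unfolding elen_def e using ij by (auto simp: min_def max_def)
  show ?thesis
  proof (cases "{i,j} \<subseteq> F")
    case False
    have "\<And>t. face_volume ((\<lambda>_. 1)(e := t)) F = sqrt (det (mat k k (\<lambda>(p,q). ((1::real)^2 + 1^2 - (if p = q then 0 else 1^2)) / 2))) / fact k"
    proof -
      fix t :: real
      have w: "\<And>a b. a < Suc k \<Longrightarrow> b < Suc k \<Longrightarrow> a \<noteq> b \<Longrightarrow> elen ((\<lambda>_. 1)(e := t)) (as!a) (as!b) = 1"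
        unfolding el using False setas len nth_mem by (metis insert_subset empty_subsetI)
      show "face_volume ((\<lambda>_. 1)(e := t)) F = sqrt (det (mat k k (\<lambda>(p,q). ((1::real)^2 + 1^2 - (if p = q then 0 else 1^2)) / 2))) / fact k"
        using gram_expl[where w="\<lambda>_ _. 1", OF len w] unfolding fv by simp
    qed
    then have "(\<lambda>t. face_volume ((\<lambda>_. 1)(e := t)) F) = (\<lambda>t. sqrt (det (mat k k (\<lambda>(p,q). ((1::real)^2 + 1^2 - (if p = q then 0 else 1^2)) / 2))) / fact k)"
      by (rule ext)
    moreover have "incid e F = 0" unfolding incid_def e using False by simp
    ultimately show ?thesis by simp
  next
    case True
    then obtain r s where rs: "r < Suc k" "s < Suc k" "as ! r = i" "as ! s = j"
      using setas len by (metis in_set_conv_nth insert_subset)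
    have "r < s"
    proof (rule ccontr)
      assume "\<not> r < s"
      then have "as ! s \<le> as ! r" using sorted_nth_mono[OF sorted, of s r] rs len by simp
      then show False using rs ij by simp
    qed
    have idx: "\<And>a b. a < Suc k \<Longrightarrow> b < Suc k \<Longrightarrow>
       ((as!a = i \<and> as!b = j) \<or> (as!a = j \<and> as!b = i)) \<longleftrightarrow> ((a = r \<and> b = s) \<or> (a = s \<and> b = r))"
      using rs dist len by (auto simp: nth_eq_iff_index_eq)
    have inc: "incid e F = 1" unfolding incid_def e using True by simp
    have "\<exists>P. (\<forall>t. det (gram_of_lengths ((\<lambda>_. 1)(e := t)) as) = (1/2)^k * P t) \<and> P 1 = real k + 1 \<and> (P has_real_derivative 4) (at 1)"
    proof (cases "r = 0")
      case True
      define m where "m = s - 1"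
      have m: "m < k" "s = Suc m" using \<open>r < s\<close> rs True unfolding m_def by auto
      define P where "P t = t^2 * ((real k + 1) + (t^2 - 1) * (1 - real k))" for t :: real
      {
        fix t :: real
        have w: "\<And>a b. a < Suc k \<Longrightarrow> b < Suc k \<Longrightarrow> a \<noteq> b \<Longrightarrow> elen ((\<lambda>_. 1)(e := t)) (as!a) (as!b)
            = (if (a = r \<and> b = s) \<or> (a = s \<and> b = r) then t else 1)"
          unfolding el using idx by simp
        have G: "gram_of_lengths ((\<lambda>_. 1)(e := t)) as = mat k k (\<lambda>(p,q). (((\<lambda>a b. if (a = r \<and> b = s) \<or> (a = s \<and> b = r) then t else 1) 0 (Suc p))^2 + ((\<lambda>a b. if (a = r \<and> b = s) \<or> (a = s \<and> b = r) then t else 1) 0 (Suc q))^2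
             - (if p = q then 0 else ((\<lambda>a b. if (a = r \<and> b = s) \<or> (a = s \<and> b = r) then t else 1) (Suc p) (Suc q))^2)) / 2)"
          by (rule gram_expl[OF len w])
        have "gram_of_lengths ((\<lambda>_. 1)(e := t)) as = (1/2) \<cdot>\<^sub>m mat k k (\<lambda>(p,q). (if p=m then t else 1)^2 + (if q=m then t else 1)^2 - (if p=q then 0 else 1))"
          unfolding G by (rule eq_matI) (use True m in auto)
        then have "det (gram_of_lengths ((\<lambda>_. 1)(e := t)) as) = (1/2)^k * P t"
          using caseB_det[OF m(1), of t] unfolding P_def by (simp add: det_smult)
      }
      moreover have "P 1 = real k + 1" unfolding P_def by simp
      moreover have "(P has_real_derivative 4) (at 1)"
      proof -
        have "(P has_real_derivative (2 * 1 * ((real k + 1) + (1^2 - 1) * (1 - real k)) + 1^2 * (2 * 1 * (1 - real k)))) (at 1)"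
          unfolding P_def[abs_def] by (auto intro!: derivative_eq_intros)
        then show ?thesis by simp
      qed
      ultimately show ?thesis by blast
    next
      case False
      define p q where "p = r - 1" and "q = s - 1"
      have pq: "p < q" "q < k" "r = Suc p" "s = Suc q" using \<open>r < s\<close> rs False unfolding p_def q_def by auto
      define P where "P t = (real k + 1) - 2 * (1 - t^2) - (real k - 1) * (1 - t^2)^2" for t :: real
      {
        fix t :: real
        have w: "\<And>a b. a < Suc k \<Longrightarrow> b < Suc k \<Longrightarrow> a \<noteq> b \<Longrightarrow> elen ((\<lambda>_. 1)(e := t)) (as!a) (as!b)
            = (if (a = r \<and> b = s) \<or> (a = s \<and> b = r) then t else 1)"
          unfolding el using idx by simp
        have G: "gram_of_lengths ((\<lambda>_. 1)(e := t)) as = mat k k (\<lambda>(p,q). (((\<lambda>a b. if (a = r \<and> b = s) \<or> (a = s \<and> b = r) then t else 1) 0 (Suc p))^2 + ((\<lambda>a b. if (a = r \<and> b = s) \<or> (a = s \<and> b = r) then t else 1) 0 (Suc q))^2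
             - (if p = q then 0 else ((\<lambda>a b. if (a = r \<and> b = s) \<or> (a = s \<and> b = r) then t else 1) (Suc p) (Suc q))^2)) / 2)"
          by (rule gram_expl[OF len w])
        have "gram_of_lengths ((\<lambda>_. 1)(e := t)) as = (1/2) \<cdot>\<^sub>m mat k k (\<lambda>(a,b). if a = b then 2 else if {a,b} = {p,q} then 2 - t^2 else 1)"
          unfolding G by (rule eq_matI) (use pq in \<open>auto simp: doubleton_eq_iff\<close>)
        then have "det (gram_of_lengths ((\<lambda>_. 1)(e := t)) as) = (1/2)^k * P t"
          using caseA_det[OF pq(1,2), of t] unfolding P_def by (simp add: det_smult)
      }
      moreover have "P 1 = real k + 1" unfolding P_def by simp
      moreover have "(P has_real_derivative 4) (at 1)"
      proof -
        have "(P has_real_derivative (- (2 * (- (2 * 1))) - (real k - 1) * (2 * (1 - 1^2) * (- (2 * 1))))) (at 1)"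
          unfolding P_def[abs_def] by (auto intro!: derivative_eq_intros)
        then show ?thesis by simp
      qed
      ultimately show ?thesis by blast
    qed
    then obtain P where P: "\<And>t. det (gram_of_lengths ((\<lambda>_. 1)(e := t)) as) = (1/2)^k * P t"
      "P 1 = real k + 1" "(P has_real_derivative 4) (at 1)" by blast
    have eqf: "(\<lambda>t. face_volume ((\<lambda>_. 1)(e := t)) F) = (\<lambda>t. sqrt ((1/2)^k * P t) / fact k)"
      unfolding fv P(1) by simp
    have c: "1 / (fact (n - 2) * sqrt (real n - 1) * 2 powr ((real n - 4) / 2)) * incid e F
       = 1 / (fact k * sqrt (real k + 1) * 2 powr ((real k - 2) / 2))"
      unfolding inc nk by (simp add: algebra_simps)
    show ?thesis unfolding eqf c by (rule final_deriv[OF k1 P(2,3)])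
  qed
qed

end
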